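(* For every $\lambda>0$, $\mathrm{KD}_\lambda$ is a metric on $V$: for all $x,y,z\in V$, (1) $\mathrm{KD}_\lambda(x,y)=0$ if and only if $x=y$; (2) $\mathrm{KD}_\lambda(x,y)=\mathrm{KD}_\lambda(y,x)$; (3) $\mathrm{KD}_\lambda(x,z)\le\mathrm{KD}_\lambda(x,y)+\mathrm{KD}_\lambda(y,z)$.
   Context: Let $H=(V,E,w)$ be a weighted hypergraph: $V$ is a finite set, $E$ a set of nonempty subsets of $V$, $w\colon E\to\mathbb{R}_{>0}$. Write $x\sim y$ if some $e\in E$ contains both; $H$ is assumed connected. The degree is $d_x=\sum_{e\ni x}w_e>0$, $D=\mathrm{diag}(d_x)$. The distance $d(x,y)$ is the minimal $n$ with a chain $x=z_0\sim\cdots\sim z_n=y$. $\delta_x$ is the indicator of $x$. $\mathbb{R}^V$ carries the inner product $\langle f,g\rangle=\sum_x f(x)g(x)/d_x$ with norm $\|\cdot\|$. For $e\in E$ let $B_e=\mathrm{Conv}\{\delta_x-\delta_y : x,y\in e\}$. The multivalued hypergraph Laplacian is $L(f)=\{\sum_{e}w_e\mathtt{b}_e(\mathtt{b}_e^\top f) : \mathtt{b}_e\in\operatorname{argmax}_{\mathtt b\in B_e}\mathtt b^\top f\}$ and the normalized Laplacian is $\mathcal{L}f=L(D^{-1}f)$, a maximal monotone operator on $(\mathbb{R}^V,\langle\cdot,\cdot\rangle)$. For $\lambda>0$ the resolvent $J_\lambda=(I+\lambda\mathcal L)^{-1}$ is a single-valued map $\mathbb{R}^V\to\mathbb{R}^V$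 (equivalently $J_\lambda f=\operatorname{argmin}_g\{\frac{1}{2\lambda}\|f-g\|^2+Q(D^{-1}g)\}$, $Q(g)=\frac12\sum_e w_e\max_{x,y\in e}(g(x)-g(y))^2$). A function $f$ is weighted $1$-Lipschitz if $|f(x)/d_x-f(y)/d_y|\le d(x,y)$ for all $x,y$; $\mathrm{Lip}^1_w(V)$ denotes the set of such functions. $\mathrm{KD}_\lambda(x,y)=\sup\{\langle J_\lambda f,\delta_x-\delta_y\rangle : f\in\mathrm{Lip}^1_w(V)\}$. *)

theory Defs
  imports "HOL-Analysis.Analysis"
begin

definition hadj :: "'v set set \<Rightarrow> 'v \<Rightarrow> 'v \<Rightarrow> bool" where
  "hadj E x y \<longleftrightarrow> (\<exists>e\<in>E. x \<in> e \<and> y \<in> e)"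

definition hyper_graph :: "'v set set \<Rightarrow> ('v set \<Rightarrow> real) \<Rightarrow> bool" where
  "hyper_graph E w \<longleftrightarrow> (\<forall>e\<in>E. e \<noteq> {} \<and> w e > 0)"

definition hconnected :: "'v set set \<Rightarrow> bool" where
  "hconnected E \<longleftrightarrow> (\<forall>x y. (x, y) \<in> {(a, b). hadj E a b}\<^sup>*)"

definition hdeg :: "'v set set \<Rightarrow> ('v set \<Rightarrow> real) \<Rightarrow> 'v \<Rightarrow> real" where
  "hdeg E w x = (\<Sum>e\<in>{e\<in>E. x \<in> e}. w e)"

definition hdist :: "'v set set \<Rightarrow> 'v \<Rightarrow> 'v \<Rightarrow> nat" where
  "hdist E x y = (LEAST n. (x, y) \<in> {(a, b). hadj E a b} ^^ n)"

definition delta :: "'v::finite \<Rightarrow> real^'v" where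
  "delta x = axis x 1"

definition wip :: "'v set set \<Rightarrow> ('v set \<Rightarrow> real) \<Rightarrow> real^'v::finite \<Rightarrow> real^'v \<Rightarrow> real" where
  "wip E w f g = (\<Sum>x\<in>UNIV. f $ x * g $ x / hdeg E w x)"

definition Bset :: "'v::finite set \<Rightarrow> (real^'v) set" where
  "Bset e = convex hull {delta x - delta y | x y. x \<in> e \<and> y \<in> e}"

definition hLap :: "'v::finite set set \<Rightarrow> ('v set \<Rightarrow> real) \<Rightarrow> real^'v \<Rightarrow> (real^'v) set" where
  "hLap E w f = {(\<Sum>e\<in>E. (w e * (b e \<bullet> f)) *\<^sub>R b e) | b.
      \<forall>e\<in>E. b e \<in> Bset e \<and> (\<forall>c\<in>Bset e. c \<bullet> f \<le> b e \<bullet> f)}"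

definition Dinv :: "'v set set \<Rightarrow> ('v set \<Rightarrow> real) \<Rightarrow> real^'v::finite \<Rightarrow> real^'v" where
  "Dinv E w f = (\<chi> x. f $ x / hdeg E w x)"

definition nLap :: "'v::finite set set \<Rightarrow> ('v set \<Rightarrow> real) \<Rightarrow> real^'v \<Rightarrow> (real^'v) set" where
  "nLap E w f = hLap E w (Dinv E w f)"

text \<open>Resolvent J_lambda = (I + lambda L)^{-1}: the unique g with f \<in> g + lambda L g.\<close>
definition resolvent :: "'v::finite set set \<Rightarrow> ('v set \<Rightarrow> real) \<Rightarrow> real \<Rightarrow> real^'v \<Rightarrow> real^'v" where
  "resolvent E w lam f = (THE g. f \<in> (\<lambda>u. g + lam *\<^sub>R u) ` nLap E w g)"

definition wLip1 :: "'v::finite set set \<Rightarrow> ('v set \<Rightarrow> real) \<Rightarrow> (real^'v) set" where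
  "wLip1 E w = {f. \<forall>x y. \<bar>f $ x / hdeg E w x - f $ y / hdeg E w y\<bar> \<le> real (hdist E x y)}"

definition KD :: "'v::finite set set \<Rightarrow> ('v set \<Rightarrow> real) \<Rightarrow> real \<Rightarrow> 'v \<Rightarrow> 'v \<Rightarrow> real" where
  "KD E w lam x y = (SUP f\<in>wLip1 E w. wip E w (resolvent E w lam f) (delta x - delta y))"

end

theory Submission
  imports Defs
begin


definition Pg :: "'v::finite set \<Rightarrow> (real^'v) set" where
  "Pg e = {delta x - delta y | x y. x \<in> e \<and> y \<in> e}"

definition sig :: "'v::finite set \<Rightarrow> real^'v \<Rightarrow> real" where
  "sig e p = Max ((\<lambda>q. q \<bullet> p) ` Pg e)"

lemma inner_delta[simp]: "delta a \<bullet> v = v $ a" "v \<bullet> delta a = v $ a"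
  by (simp_all add: delta_def inner_axis inner_axis')

lemma delta_nth: "delta a $ z = (if z = a then 1 else 0)"
  by (simp add: delta_def axis_def)

lemma finite_Pg: "finite (Pg e)"
  unfolding Pg_def by (rule finite_image_set2) auto

lemma Pg_ne: "e \<noteq> {} \<Longrightarrow> Pg e \<noteq> {}"
  unfolding Pg_def by auto

lemma zero_Pg: "e \<noteq> {} \<Longrightarrow> 0 \<in> Pg e"
proof -
  assume "e \<noteq> {}" then obtain a where "a \<in> e" by blast
  hence "delta a - delta a \<in> Pg e" unfolding Pg_def by blast
  thus ?thesis by simp
qed

lemma Bset_eq: "Bset e = convex hull (Pg e)"
  unfolding Bset_def Pg_def by simp

lemma Pg_sub: "Pg e \<subseteq> Bset e"
  unfolding Bset_eq by (rule hull_subset)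

lemma sig_attained: "e \<noteq> {} \<Longrightarrow> \<exists>q\<in>Pg e. q \<bullet> p = sig e p"
proof -
  assume ne: "e \<noteq> {}"
  have "Max ((\<lambda>q. q \<bullet> p) ` Pg e) \<in> (\<lambda>q. q \<bullet> p) ` Pg e"
    by (rule Max_in) (simp_all add: finite_Pg Pg_ne[OF ne])
  then obtain q where "q \<in> Pg e" "q \<bullet> p = Max ((\<lambda>q. q \<bullet> p) ` Pg e)" by auto
  thus ?thesis unfolding sig_def by blast
qed

lemma Pg_le_sig: "q \<in> Pg e \<Longrightarrow> q \<bullet> p \<le> sig e p"
  unfolding sig_def by (rule Max_ge) (simp_all add: finite_Pg)

lemma Bset_le_sig: assumes "b \<in> Bset e" shows "b \<bullet> p \<le> sig e p"
proof -
  have "convex hull (Pg e) \<subseteq> {b. inner b p \<le> sig e p}"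
  proof (rule hull_minimal)
    show "Pg e \<subseteq> {b. b \<bullet> p \<le> sig e p}" using Pg_le_sig by auto
    show "convex {b. b \<bullet> p \<le> sig e p}"
      using convex_halfspace_le[of p "sig e p"] by (simp add: inner_commute)
  qed
  thus ?thesis using assms Bset_eq by auto
qed

lemma sig_nonneg: "e \<noteq> {} \<Longrightarrow> 0 \<le> sig e p"
  using Pg_le_sig[OF zero_Pg, of e p] by simp

lemma opt_iff: "e \<noteq> {} \<Longrightarrow> (b \<in> Bset e \<and> (\<forall>c\<in>Bset e. c \<bullet> p \<le> b \<bullet> p)) \<longleftrightarrow> (b \<in> Bset e \<and> b \<bullet> p = sig e p)"
proof -
  assume ne: "e \<noteq> {}"
  obtain q where q: "q \<in> Pg e" "q \<bullet> p = sig e p" using sig_attained[OF ne] by blast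
  have qB: "q \<in> Bset e" using q(1) Pg_sub by blast
  show ?thesis
  proof
    assume h: "b \<in> Bset e \<and> (\<forall>c\<in>Bset e. c \<bullet> p \<le> b \<bullet> p)"
    hence "q \<bullet> p \<le> b \<bullet> p" using qB by blast
    thus "b \<in> Bset e \<and> b \<bullet> p = sig e p" using h Bset_le_sig[of b e p] q(2) by linarith
  next
    assume "b \<in> Bset e \<and> b \<bullet> p = sig e p"
    thus "b \<in> Bset e \<and> (\<forall>c\<in>Bset e. c \<bullet> p \<le> b \<bullet> p)" using Bset_le_sig[of _ e p] by simp
  qed
qed

lemma Bset_ones: assumes "b \<in> Bset e" shows "b \<bullet> (\<chi> z. 1) = 0"
proof -
  have "convex hull (Pg e) \<subseteq> {b. inner b (\<chi> z. 1) = 0}"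
  proof (rule hull_minimal)
    show "Pg e \<subseteq> {b. b \<bullet> (\<chi> z. 1) = 0}" unfolding Pg_def by (auto simp: inner_diff_left)
    show "convex {b. b \<bullet> (\<chi> z. 1::real^'a) = 0}"
      using convex_hyperplane[of "(\<chi> z. 1::real^'a)" 0] by (simp add: inner_commute)
  qed
  thus ?thesis using assms Bset_eq by auto
qed

lemma Bset_neg: assumes "b \<in> Bset e" shows "- b \<in> Bset e"
proof -
  have l: "linear (uminus :: real^'a \<Rightarrow> real^'a)" by (rule linear_uminus)
  have "uminus ` Pg e = Pg e" unfolding Pg_def by force
  hence "uminus ` Bset e = Bset e" unfolding Bset_eq using convex_hull_linear_image[OF l, of "Pg e"] by simp
  thus ?thesis using assms by force
qed

lemma compact_Bset: "compact (Bset e)"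
  unfolding Bset_eq by (intro compact_convex_hull finite_imp_compact finite_Pg)

lemma convex_Bset: "convex (Bset e)"
  unfolding Bset_eq by simp

lemma sig_convex: "convex_on UNIV (sig e)"
proof (cases "e = {}")
  case True
  hence "Pg e = {}" unfolding Pg_def by auto
  thus ?thesis unfolding sig_def by (simp add: convex_on_const)
next
  case False
  show ?thesis
  proof (rule convex_onI)
    fix t x y assume t: "0 < t" "t < (1::real)"
    obtain q where q: "q \<in> Pg e" "q \<bullet> ((1 - t) *\<^sub>R x + t *\<^sub>R y) = sig e ((1 - t) *\<^sub>R x + t *\<^sub>R y)"
      using sig_attained[OF False] by blast
    have "q \<bullet> ((1 - t) *\<^sub>R x + t *\<^sub>R y) = (1-t) * (q \<bullet> x) + t * (q \<bullet> y)"
      by (simp add: inner_add_right)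
    also have "\<dots> \<le> (1-t) * sig e x + t * sig e y"
      using Pg_le_sig[OF q(1)] t by (intro add_mono mult_left_mono) auto
    finally show "sig e ((1 - t) *\<^sub>R x + t *\<^sub>R y) \<le> (1 - t) * sig e x + t * sig e y" using q by simp
  qed simp
qed

lemma sig_cont: "continuous_on UNIV (sig e)"
  using convex_on_continuous[OF open_UNIV sig_convex] .

lemma sig_cont'[continuous_intros]: "continuous_on S g \<Longrightarrow> continuous_on S (\<lambda>x. sig e (g x))"
  by (rule continuous_on_compose2[OF sig_cont]) auto




definition Tset :: "'i set \<Rightarrow> ('i \<Rightarrow> real) \<Rightarrow> ('i \<Rightarrow> 'a::real_normed_vector set) \<Rightarrow> 'a set" where
  "Tset I c A = {(\<Sum>e\<in>I. c e *\<^sub>R b e) | b. \<forall>e\<in>I. b e \<in> A e}"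

lemma Tset_empty: "Tset {} c A = {0}"
  unfolding Tset_def by auto

lemma Tset_insert:
  assumes "e \<notin> I" "finite I"
  shows "Tset (insert e I) c A = {x + y | x y. x \<in> (\<lambda>a. c e *\<^sub>R a) ` A e \<and> y \<in> Tset I c A}"
proof (intro equalityI subsetI)
  fix z assume "z \<in> Tset (insert e I) c A"
  then obtain b where b: "\<forall>e'\<in>insert e I. b e' \<in> A e'" "z = (\<Sum>e'\<in>insert e I. c e' *\<^sub>R b e')"
    unfolding Tset_def by blast
  have "z = c e *\<^sub>R b e + (\<Sum>e'\<in>I. c e' *\<^sub>R b e')" using b(2) assms by simp
  moreover have "(\<Sum>e'\<in>I. c e' *\<^sub>R b e') \<in> Tset I c A" unfolding Tset_def using b(1) by blast
  moreover have "c e *\<^sub>R b e \<in> (\<lambda>a. c e *\<^sub>R a) ` A e" using b(1) by blast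
  ultimately show "z \<in> {x + y | x y. x \<in> (\<lambda>a. c e *\<^sub>R a) ` A e \<and> y \<in> Tset I c A}" by blast
next
  fix z assume "z \<in> {x + y | x y. x \<in> (\<lambda>a. c e *\<^sub>R a) ` A e \<and> y \<in> Tset I c A}"
  then obtain a b where ab: "a \<in> A e" "\<forall>e'\<in>I. b e' \<in> A e'" "z = c e *\<^sub>R a + (\<Sum>e'\<in>I. c e' *\<^sub>R b e')"
    unfolding Tset_def by blast
  define b' where "b' = b(e := a)"
  have "(\<Sum>e'\<in>I. c e' *\<^sub>R b' e') = (\<Sum>e'\<in>I. c e' *\<^sub>R b e')"
    using assms(1) unfolding b'_def by (intro sum.cong) auto
  hence "z = (\<Sum>e'\<in>insert e I. c e' *\<^sub>R b' e')" using ab(3) assms by (simp add: b'_def)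
  moreover have "\<forall>e'\<in>insert e I. b' e' \<in> A e'" using ab unfolding b'_def by auto
  ultimately show "z \<in> Tset (insert e I) c A" unfolding Tset_def by blast
qed

lemma Tset_compact_convex:
  assumes "finite I" "\<forall>e\<in>I. compact (A e) \<and> convex (A e)"
  shows "compact (Tset I c A) \<and> convex (Tset I c A)"
  using assms
proof (induction I rule: finite_induct)
  case empty
  then show ?case by (simp add: Tset_empty)
next
  case (insert e I)
  have 1: "compact ((\<lambda>a. c e *\<^sub>R a) ` A e)" "convex ((\<lambda>a. c e *\<^sub>R a) ` A e)"
    using insert.prems by (auto intro: compact_scaling convex_scaling)
  have 2: "compact (Tset I c A)" "convex (Tset I c A)" using insert by auto
  have "convex {x + y | x y. x \<in> (\<lambda>a. c e *\<^sub>R a) ` A e \<and> y \<in> Tset I c A}"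
  proof -
    have "{x + y | x y. x \<in> (\<lambda>a. c e *\<^sub>R a) ` A e \<and> y \<in> Tset I c A}
       = (\<Union>x\<in>(\<lambda>a. c e *\<^sub>R a) ` A e. \<Union>y\<in>Tset I c A. {x + y})" by blast
    thus ?thesis using convex_sums[OF 1(2) 2(2)] by simp
  qed
  then show ?case unfolding Tset_insert[OF insert(2,1)] using compact_sums[OF 1(1) 2(1)] by simp
qed

definition Aset :: "'v::finite set \<Rightarrow> real^'v \<Rightarrow> (real^'v) set" where
  "Aset e p = {b \<in> Bset e. b \<bullet> p = sig e p}"

lemma Aset_eq: "Aset e p = Bset e \<inter> {b. inner p b \<ge> sig e p}"
  unfolding Aset_def using Bset_le_sig[of _ e p] by (auto simp: inner_commute intro: antisym)

lemma Aset_cc: "compact (Aset e p) \<and> convex (Aset e p)"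
  unfolding Aset_eq
  by (intro conjI compact_Int_closed compact_Bset closed_halfspace_ge convex_Int convex_Bset convex_halfspace_ge)

lemma hLap_eq:
  assumes "\<forall>e\<in>E. e \<noteq> {}"
  shows "hLap E w p = Tset E (\<lambda>e. w e * sig e p) (\<lambda>e. Aset e p)"
proof -
  have c: "\<And>b. (\<forall>e\<in>E. b e \<in> Bset e \<and> (\<forall>c\<in>Bset e. c \<bullet> p \<le> b e \<bullet> p)) \<longleftrightarrow> (\<forall>e\<in>E. b e \<in> Aset e p)"
  proof -
    fix b
    have "\<And>e. e \<in> E \<Longrightarrow> (b e \<in> Bset e \<and> (\<forall>c\<in>Bset e. c \<bullet> p \<le> b e \<bullet> p)) \<longleftrightarrow> b e \<in> Aset e p"
    proof -
      fix e assume "e \<in> E" hence "e \<noteq> {}" using assms by blast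
      thus "?thesis e" unfolding Aset_def using opt_iff[of e "b e" p] by simp
    qed
    thus "?thesis b" by (simp only: Ball_def) blast
  qed
  have s: "\<And>b. (\<forall>e\<in>E. b e \<in> Aset e p) \<Longrightarrow> (\<Sum>e\<in>E. (w e * (b e \<bullet> p)) *\<^sub>R b e) = (\<Sum>e\<in>E. (w e * sig e p) *\<^sub>R b e)"
    unfolding Aset_def by (intro sum.cong refl) simp
  show ?thesis unfolding hLap_def Tset_def
  proof (intro equalityI subsetI)
    fix x assume "x \<in> {\<Sum>e\<in>E. (w e * (b e \<bullet> p)) *\<^sub>R b e |b. \<forall>e\<in>E. b e \<in> Bset e \<and> (\<forall>c\<in>Bset e. c \<bullet> p \<le> b e \<bullet> p)}"
    then obtain b where b: "\<forall>e\<in>E. b e \<in> Bset e \<and> (\<forall>c\<in>Bset e. c \<bullet> p \<le> b e \<bullet> p)" "x = (\<Sum>e\<in>E. (w e * (b e \<bullet> p)) *\<^sub>R b e)" by blast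
    have b1: "\<forall>e\<in>E. b e \<in> Aset e p" using c[of b] b(1) by simp
    have "x = (\<Sum>e\<in>E. (w e * sig e p) *\<^sub>R b e)" using s[OF b1] b(2) by simp
    with b1 show "x \<in> {\<Sum>e\<in>E. (w e * sig e p) *\<^sub>R b e |b. \<forall>e\<in>E. b e \<in> Aset e p}" by blast
  next
    fix x assume "x \<in> {\<Sum>e\<in>E. (w e * sig e p) *\<^sub>R b e |b. \<forall>e\<in>E. b e \<in> Aset e p}"
    then obtain b where b: "\<forall>e\<in>E. b e \<in> Aset e p" "x = (\<Sum>e\<in>E. (w e * sig e p) *\<^sub>R b e)" by blast
    have b1: "\<forall>e\<in>E. b e \<in> Bset e \<and> (\<forall>c\<in>Bset e. c \<bullet> p \<le> b e \<bullet> p)" using c[of b] b(1) by simp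
    have "x = (\<Sum>e\<in>E. (w e * (b e \<bullet> p)) *\<^sub>R b e)" using s[OF b(1)] b(2) by simp
    with b1 show "x \<in> {\<Sum>e\<in>E. (w e * (b e \<bullet> p)) *\<^sub>R b e |b. \<forall>e\<in>E. b e \<in> Bset e \<and> (\<forall>c\<in>Bset e. c \<bullet> p \<le> b e \<bullet> p)}" by blast
  qed
qed

lemma hLap_cc:
  assumes "\<forall>e\<in>E. e \<noteq> {}"
  shows "closed (hLap E w p) \<and> convex (hLap E w p)"
proof -
  have "compact (Tset E (\<lambda>e. w e * sig e p) (\<lambda>e. Aset e p)) \<and> convex (Tset E (\<lambda>e. w e * sig e p) (\<lambda>e. Aset e p))"
    by (rule Tset_compact_convex) (simp_all add: Aset_cc)
  thus ?thesis unfolding hLap_eq[OF assms] using compact_imp_closed by blast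
qed




lemma sig_dir:
  assumes "e \<noteq> {}"
  shows "\<exists>q\<in>Pg e. q \<bullet> p = sig e p \<and>
     eventually (\<lambda>t. sig e (p + t *\<^sub>R v) \<le> sig e p + t * (q \<bullet> v)) (at_right 0)"
proof -
  define Pm where "Pm = {q \<in> Pg e. q \<bullet> p = sig e p}"
  have fPm: "finite Pm" unfolding Pm_def by (rule finite_subset[OF _ finite_Pg]) blast
  have nPm: "Pm \<noteq> {}" unfolding Pm_def using sig_attained[OF assms, of p] by blast
  define m where "m = Max ((\<lambda>q. q \<bullet> v) ` Pm)"
  have "m \<in> (\<lambda>q. q \<bullet> v) ` Pm" unfolding m_def by (rule Max_in) (simp_all add: fPm nPm)
  then obtain q where q: "q \<in> Pm" "q \<bullet> v = m" by blast
  have mge: "\<And>r. r \<in> Pm \<Longrightarrow> r \<bullet> v \<le> m" unfolding m_def by (rule Max_ge) (simp_all add: fPm)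
  have ev: "\<forall>r\<in>Pg e. eventually (\<lambda>t. r \<bullet> (p + t *\<^sub>R v) \<le> sig e p + t * m) (at_right 0)"
  proof
    fix r assume r: "r \<in> Pg e"
    show "eventually (\<lambda>t. r \<bullet> (p + t *\<^sub>R v) \<le> sig e p + t * m) (at_right 0)"
    proof (cases "r \<in> Pm")
      case True
      have "eventually (\<lambda>t::real. 0 < t) (at_right 0)" by (rule eventually_at_right_less)
      thus ?thesis
      proof (rule eventually_mono)
        fix t :: real assume t: "0 < t"
        have "r \<bullet> (p + t *\<^sub>R v) = r \<bullet> p + t * (r \<bullet> v)" by (simp add: inner_add_right)
        also have "\<dots> \<le> sig e p + t * m"
          using True mge[OF True] t unfolding Pm_def by (simp add: mult_left_mono)
        finally show "r \<bullet> (p + t *\<^sub>R v) \<le> sig e p + t * m" .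
      qed
    next
      case False
      hence lt: "r \<bullet> p < sig e p" using Pg_le_sig[OF r, of p] r unfolding Pm_def by simp
      have "((\<lambda>t::real. r \<bullet> p + t * (r \<bullet> v) - t * m) \<longlongrightarrow> r \<bullet> p + 0 * (r \<bullet> v) - 0 * m) (at_right 0)"
        by (intro tendsto_intros)
      hence "((\<lambda>t::real. r \<bullet> p + t * (r \<bullet> v) - t * m) \<longlongrightarrow> r \<bullet> p) (at_right 0)" by simp
      from order_tendstoD(2)[OF this lt]
      show ?thesis
      proof (rule eventually_mono)
        fix t :: real assume "r \<bullet> p + t * (r \<bullet> v) - t * m < sig e p"
        thus "r \<bullet> (p + t *\<^sub>R v) \<le> sig e p + t * m" by (simp add: inner_add_right)
      qed
    qed
  qed
  have "eventually (\<lambda>t. \<forall>r\<in>Pg e. r \<bullet> (p + t *\<^sub>R v) \<le> sig e p + t * m) (at_right 0)"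
    by (rule eventually_ball_finite[OF finite_Pg ev])
  hence "eventually (\<lambda>t. sig e (p + t *\<^sub>R v) \<le> sig e p + t * m) (at_right 0)"
  proof (rule eventually_mono)
    fix t :: real assume h: "\<forall>r\<in>Pg e. r \<bullet> (p + t *\<^sub>R v) \<le> sig e p + t * m"
    show "sig e (p + t *\<^sub>R v) \<le> sig e p + t * m"
      unfolding sig_def[of e "p + t *\<^sub>R v"] using h by (subst Max_le_iff) (simp_all add: finite_Pg Pg_ne[OF assms])
  qed
  thus ?thesis using q unfolding Pm_def by blast
qed




definition Qf :: "'v::finite set set \<Rightarrow> ('v set \<Rightarrow> real) \<Rightarrow> real^'v \<Rightarrow> real" where
  "Qf E w p = (\<Sum>e\<in>E. w e * (sig e p)\<^sup>2 / 2)"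

lemma finE: "finite (E :: 'v::finite set set)"
  by (rule finite_subset[OF subset_UNIV]) simp

lemma Q_dir:
  fixes E :: "'v::finite set set"
  assumes hE: "\<forall>e\<in>E. e \<noteq> {}" and hw: "\<forall>e\<in>E. w e > 0"
  shows "\<exists>s\<in>hLap E w p. \<exists>K\<ge>0. eventually (\<lambda>t. Qf E w (p + t *\<^sub>R v) \<le> Qf E w p + t * (s \<bullet> v) + t\<^sup>2 * K) (at_right 0)"
proof -
  have ex: "\<forall>e\<in>E. \<exists>q. q \<in> Pg e \<and> q \<bullet> p = sig e p \<and>
     eventually (\<lambda>t. sig e (p + t *\<^sub>R v) \<le> sig e p + t * (q \<bullet> v)) (at_right 0)"
  proof
    fix e assume "e \<in> E" hence "e \<noteq> {}" using hE by blast
    from sig_dir[OF this, of p v] show "\<exists>q. q \<in> Pg e \<and> q \<bullet> p = sig e p \<and>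
     eventually (\<lambda>t. sig e (p + t *\<^sub>R v) \<le> sig e p + t * (q \<bullet> v)) (at_right 0)" by blast
  qed
  obtain q where q: "\<forall>e\<in>E. q e \<in> Pg e \<and> q e \<bullet> p = sig e p \<and>
     eventually (\<lambda>t. sig e (p + t *\<^sub>R v) \<le> sig e p + t * (q e \<bullet> v)) (at_right 0)"
    using bchoice[OF ex] by blast
  define s where "s = (\<Sum>e\<in>E. (w e * (q e \<bullet> p)) *\<^sub>R q e)"
  have opt: "\<forall>e\<in>E. q e \<in> Bset e \<and> (\<forall>c\<in>Bset e. c \<bullet> p \<le> q e \<bullet> p)"
  proof
    fix e assume e: "e \<in> E"
    have "q e \<in> Bset e \<and> q e \<bullet> p = sig e p" using q e Pg_sub by blast
    thus "q e \<in> Bset e \<and> (\<forall>c\<in>Bset e. c \<bullet> p \<le> q e \<bullet> p)" using opt_iff[of e "q e" p] hE e by simp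
  qed
  have sL: "s \<in> hLap E w p" unfolding hLap_def s_def by (intro CollectI exI[of _ q] conjI refl opt)
  define K where "K = (\<Sum>e\<in>E. w e * (q e \<bullet> v)\<^sup>2 / 2)"
  have K0: "K \<ge> 0" unfolding K_def using hw by (intro sum_nonneg divide_nonneg_nonneg mult_nonneg_nonneg) auto
  have sv: "s \<bullet> v = (\<Sum>e\<in>E. w e * sig e p * (q e \<bullet> v))"
    unfolding s_def inner_sum_left using q by (intro sum.cong refl) simp
  have ev: "eventually (\<lambda>t. \<forall>e\<in>E. sig e (p + t *\<^sub>R v) \<le> sig e p + t * (q e \<bullet> v)) (at_right 0)"
    by (rule eventually_ball_finite[OF finE]) (use q in blast)
  have "eventually (\<lambda>t. Qf E w (p + t *\<^sub>R v) \<le> Qf E w p + t * (s \<bullet> v) + t\<^sup>2 * K) (at_right 0)"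
    using ev
  proof (rule eventually_mono)
    fix t assume h: "\<forall>e\<in>E. sig e (p + t *\<^sub>R v) \<le> sig e p + t * (q e \<bullet> v)"
    have "\<forall>e\<in>E. w e * (sig e (p + t *\<^sub>R v))\<^sup>2 / 2 \<le>
        w e * (sig e p)\<^sup>2 / 2 + t * (w e * sig e p * (q e \<bullet> v)) + t\<^sup>2 * (w e * (q e \<bullet> v)\<^sup>2 / 2)"
    proof
      fix e assume e: "e \<in> E"
      have "(sig e (p + t *\<^sub>R v))\<^sup>2 \<le> (sig e p + t * (q e \<bullet> v))\<^sup>2"
        using h e sig_nonneg[of e "p + t *\<^sub>R v"] hE by (intro power_mono) auto
      hence "w e * (sig e (p + t *\<^sub>R v))\<^sup>2 / 2 \<le> w e * (sig e p + t * (q e \<bullet> v))\<^sup>2 / 2"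
        using hw e by (intro divide_right_mono mult_left_mono) auto
      also have "\<dots> = w e * (sig e p)\<^sup>2 / 2 + t * (w e * sig e p * (q e \<bullet> v)) + t\<^sup>2 * (w e * (q e \<bullet> v)\<^sup>2 / 2)"
        by (simp add: power2_eq_square algebra_simps)
      finally show "w e * (sig e (p + t *\<^sub>R v))\<^sup>2 / 2 \<le>
        w e * (sig e p)\<^sup>2 / 2 + t * (w e * sig e p * (q e \<bullet> v)) + t\<^sup>2 * (w e * (q e \<bullet> v)\<^sup>2 / 2)" .
    qed
    hence "Qf E w (p + t *\<^sub>R v) \<le> (\<Sum>e\<in>E. w e * (sig e p)\<^sup>2 / 2 + t * (w e * sig e p * (q e \<bullet> v)) + t\<^sup>2 * (w e * (q e \<bullet> v)\<^sup>2 / 2))"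
      unfolding Qf_def by (intro sum_mono) blast
    also have "\<dots> = Qf E w p + t * (s \<bullet> v) + t\<^sup>2 * K"
      unfolding Qf_def sv K_def by (simp add: sum.distrib sum_distrib_left)
    finally show "Qf E w (p + t *\<^sub>R v) \<le> Qf E w p + t * (s \<bullet> v) + t\<^sup>2 * K" .
  qed
  thus ?thesis using sL K0 by blast
qed




lemma quad_id:
  fixes f d p t v lam :: real
  assumes "d \<noteq> 0" "lam \<noteq> 0"
  shows "(f - d * (p + t * v))\<^sup>2 / (2 * lam * d) =
     (f - d * p)\<^sup>2 / (2 * lam * d) - t * ((f - d * p) / lam * v) + t\<^sup>2 * (d * v\<^sup>2 / (2 * lam))"
  using assms by (simp add: field_simps power2_eq_square)

lemma abs_le_sq: "\<bar>a::real\<bar> \<le> 1 + a\<^sup>2"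
proof (cases "\<bar>a\<bar> \<le> 1")
  case True thus ?thesis by (simp add: add_increasing2)
next
  case False
  hence "\<bar>a\<bar> * 1 \<le> \<bar>a\<bar> * \<bar>a\<bar>" by (intro mult_left_mono) auto
  thus ?thesis by (simp add: power2_eq_square abs_mult_self_eq)
qed

lemma Qf_nonneg: "\<forall>e\<in>E. e \<noteq> {} \<Longrightarrow> \<forall>e\<in>E. w e > 0 \<Longrightarrow> 0 \<le> Qf E w p"
  unfolding Qf_def by (intro sum_nonneg divide_nonneg_nonneg mult_nonneg_nonneg) auto

lemma resolvent_exists:
  fixes E :: "'v::finite set set" and f :: "real^'v"
  assumes hE: "\<forall>e\<in>E. e \<noteq> {}" and hw: "\<forall>e\<in>E. w e > 0" and hd: "\<forall>x. hdeg E w x > 0" and lam: "lam > 0"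
  shows "\<exists>g. \<exists>u\<in>hLap E w (Dinv E w g). f = g + lam *\<^sub>R u"
proof -
  let ?d = "hdeg E w"
  have dnz: "\<And>z. ?d z \<noteq> 0" using hd by (metis less_irrefl)
  define F where "F p = (\<Sum>z\<in>UNIV. (f$z - ?d z * p$z)\<^sup>2 / (2 * lam * ?d z)) + Qf E w p" for p
  have cont: "continuous_on UNIV F"
    unfolding F_def Qf_def using dnz lam by (intro continuous_intros) auto
  define S where "S = {p. F p \<le> F 0}"
  have clS: "closed S" unfolding S_def by (rule closed_Collect_le[OF cont continuous_on_const])
  have termle: "\<And>p z. p \<in> S \<Longrightarrow> (f$z - ?d z * p$z)\<^sup>2 / (2 * lam * ?d z) \<le> F 0"
  proof -
    fix p z assume "p \<in> S"
    hence "F p \<le> F 0" unfolding S_def by simp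
    moreover have "(f$z - ?d z * p$z)\<^sup>2 / (2 * lam * ?d z) \<le> (\<Sum>z\<in>UNIV. (f$z - ?d z * p$z)\<^sup>2 / (2 * lam * ?d z))"
      using hd lam by (intro member_le_sum divide_nonneg_nonneg mult_nonneg_nonneg) (auto simp: less_imp_le)
    moreover have "0 \<le> Qf E w p" by (rule Qf_nonneg[OF hE hw])
    ultimately show "(f$z - ?d z * p$z)\<^sup>2 / (2 * lam * ?d z) \<le> F 0" unfolding F_def by linarith
  qed
  define B where "B z = (\<bar>f$z\<bar> + 1 + 2 * lam * ?d z * F 0) / ?d z" for z
  have compB: "\<And>p z. p \<in> S \<Longrightarrow> \<bar>p$z\<bar> \<le> B z"
  proof -
    fix p z assume pS: "p \<in> S"
    have dz: "?d z > 0" using hd by blast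
    have "(f$z - ?d z * p$z)\<^sup>2 \<le> 2 * lam * ?d z * F 0"
      using termle[OF pS, of z] dz lam by (simp add: divide_le_eq mult.commute)
    hence "\<bar>f$z - ?d z * p$z\<bar> \<le> 1 + 2 * lam * ?d z * F 0" using abs_le_sq[of "f$z - ?d z * p$z"] by linarith
    hence "\<bar>?d z * p$z\<bar> \<le> \<bar>f$z\<bar> + 1 + 2 * lam * ?d z * F 0" by linarith
    hence "?d z * \<bar>p$z\<bar> \<le> \<bar>f$z\<bar> + 1 + 2 * lam * ?d z * F 0" using dz by (simp add: abs_mult)
    thus "\<bar>p$z\<bar> \<le> B z" unfolding B_def using dz by (simp add: le_divide_eq mult.commute)
  qed
  have bdS: "bounded S" unfolding bounded_iff
  proof (intro exI ballI)
    fix p assume pS: "p \<in> S"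
    have "norm p \<le> (\<Sum>z\<in>UNIV. \<bar>p$z\<bar>)" by (rule norm_le_l1_cart)
    also have "\<dots> \<le> (\<Sum>z\<in>UNIV. B z)" by (intro sum_mono compB[OF pS])
    finally show "norm p \<le> (\<Sum>z\<in>UNIV. B z)" .
  qed
  have cS: "compact S" using clS bdS compact_eq_bounded_closed by blast
  have S0: "0 \<in> S" unfolding S_def by simp
  obtain p0 where p0: "p0 \<in> S" "\<forall>y\<in>S. F p0 \<le> F y"
    using continuous_attains_inf[OF cS _ continuous_on_subset[OF cont subset_UNIV]] S0 by blast
  have glob: "\<And>y. F p0 \<le> F y"
  proof -
    fix y show "F p0 \<le> F y"
    proof (cases "y \<in> S")
      case True thus ?thesis using p0 by blast
    next
      case False
      hence "F 0 < F y" unfolding S_def by simp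
      moreover have "F p0 \<le> F 0" using p0 S0 by blast
      ultimately show ?thesis by linarith
    qed
  qed
  define r where "r = (\<chi> z. (f$z - ?d z * p0$z) / lam)"
  have rin: "r \<in> hLap E w p0"
  proof (rule ccontr)
    assume nr: "r \<notin> hLap E w p0"
    have cc: "closed (hLap E w p0)" "convex (hLap E w p0)" using hLap_cc[OF hE] by auto
    obtain a b where ab: "inner a r < b" "\<forall>x\<in>hLap E w p0. b < inner a x"
      using separating_hyperplane_closed_point[OF cc(2) cc(1) nr] by blast
    define v where "v = - a"
    obtain s K where sK: "s \<in> hLap E w p0" "K \<ge> 0"
      "eventually (\<lambda>t. Qf E w (p0 + t *\<^sub>R v) \<le> Qf E w p0 + t * (s \<bullet> v) + t\<^sup>2 * K) (at_right 0)"
      using Q_dir[OF hE hw, of p0 v] by blast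
    define K2 where "K2 = (\<Sum>z\<in>UNIV. ?d z * (v$z)\<^sup>2 / (2 * lam))"
    have K20: "K2 \<ge> 0" unfolding K2_def using lam hd by (intro sum_nonneg divide_nonneg_nonneg mult_nonneg_nonneg) (auto simp: less_imp_le)
    define del where "del = r \<bullet> v - s \<bullet> v"
    have delpos: "del > 0"
    proof -
      have "b < a \<bullet> s" using ab(2) sK(1) by blast
      thus ?thesis using ab(1) unfolding del_def v_def by (simp add: inner_minus_right inner_commute)
    qed
    have quad: "\<And>t. F (p0 + t *\<^sub>R v) = (\<Sum>z\<in>UNIV. (f$z - ?d z * p0$z)\<^sup>2 / (2 * lam * ?d z)) - t * (r \<bullet> v) + t\<^sup>2 * K2 + Qf E w (p0 + t *\<^sub>R v)"
    proof -
      fix t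
      have "(\<Sum>z\<in>UNIV. (f$z - ?d z * (p0 + t *\<^sub>R v)$z)\<^sup>2 / (2 * lam * ?d z))
          = (\<Sum>z\<in>UNIV. (f$z - ?d z * p0$z)\<^sup>2 / (2 * lam * ?d z) - t * ((f$z - ?d z * p0$z) / lam * v$z) + t\<^sup>2 * (?d z * (v$z)\<^sup>2 / (2 * lam)))"
      proof (rule sum.cong[OF refl])
        fix z
        have "?d z \<noteq> 0" by (rule dnz)
        thus "(f$z - ?d z * (p0 + t *\<^sub>R v)$z)\<^sup>2 / (2 * lam * ?d z)
          = (f$z - ?d z * p0$z)\<^sup>2 / (2 * lam * ?d z) - t * ((f$z - ?d z * p0$z) / lam * v$z) + t\<^sup>2 * (?d z * (v$z)\<^sup>2 / (2 * lam))"
          using quad_id[of "?d z" lam "f$z" "p0$z" t "v$z"] lam by simp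
      qed
      also have "\<dots> = (\<Sum>z\<in>UNIV. (f$z - ?d z * p0$z)\<^sup>2 / (2 * lam * ?d z)) - t * (r \<bullet> v) + t\<^sup>2 * K2"
        unfolding K2_def r_def inner_vec_def by (simp add: sum.distrib sum_subtractf sum_distrib_left)
      finally show "F (p0 + t *\<^sub>R v) = (\<Sum>z\<in>UNIV. (f$z - ?d z * p0$z)\<^sup>2 / (2 * lam * ?d z)) - t * (r \<bullet> v) + t\<^sup>2 * K2 + Qf E w (p0 + t *\<^sub>R v)"
        unfolding F_def by simp
    qed
    have lim: "((\<lambda>t::real. t * (K + K2)) \<longlongrightarrow> 0 * (K + K2)) (at_right 0)"
      by (intro tendsto_intros)
    have ev2: "eventually (\<lambda>t::real. t * (K + K2) < del) (at_right 0)"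
      using order_tendstoD(2)[OF lim] delpos by simp
    have "eventually (\<lambda>t. F (p0 + t *\<^sub>R v) < F p0) (at_right 0)"
      using eventually_conj[OF sK(3) eventually_conj[OF ev2 eventually_at_right_less]]
    proof (rule eventually_mono)
      fix t :: real
      assume h: "Qf E w (p0 + t *\<^sub>R v) \<le> Qf E w p0 + t * (s \<bullet> v) + t\<^sup>2 * K \<and> t * (K + K2) < del \<and> 0 < t"
      have "F (p0 + t *\<^sub>R v) \<le> F p0 - t * del + t\<^sup>2 * (K + K2)"
        using quad[of t] quad[of 0] h unfolding del_def by (simp add: algebra_simps)
      also have "\<dots> = F p0 + t * (t * (K + K2) - del)" by (simp add: power2_eq_square algebra_simps)
      also have "\<dots> < F p0" using h by (simp add: mult_pos_neg)
      finally show "F (p0 + t *\<^sub>R v) < F p0" .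
    qed
    then obtain t where "F (p0 + t *\<^sub>R v) < F p0"
      using eventually_happens'[of "at_right (0::real)"] by force
    thus False using glob[of "p0 + t *\<^sub>R v"] by linarith
  qed
  define g where "g = (\<chi> z. ?d z * p0$z)"
  have Dg: "Dinv E w g = p0"
    unfolding Dinv_def g_def using dnz by (simp add: vec_eq_iff)
  have fe: "f = g + lam *\<^sub>R r"
    unfolding g_def r_def using lam by (simp add: vec_eq_iff)
  show ?thesis using rin fe Dg by blast
qed




lemma hLap_inner:
  fixes E :: "'v::finite set set"
  assumes hE: "\<forall>e\<in>E. e \<noteq> {}" and hw: "\<forall>e\<in>E. w e > 0" and u: "u \<in> hLap E w p"
  shows "u \<bullet> p = (\<Sum>e\<in>E. w e * (sig e p)\<^sup>2)" and "u \<bullet> q \<le> (\<Sum>e\<in>E. w e * sig e p * sig e q)"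
proof -
  obtain b where b: "\<forall>e\<in>E. b e \<in> Bset e \<and> (\<forall>c\<in>Bset e. c \<bullet> p \<le> b e \<bullet> p)"
    "u = (\<Sum>e\<in>E. (w e * (b e \<bullet> p)) *\<^sub>R b e)"
    using u unfolding hLap_def by blast
  have bs: "\<And>e. e \<in> E \<Longrightarrow> b e \<bullet> p = sig e p \<and> b e \<in> Bset e"
  proof -
    fix e assume e: "e \<in> E"
    hence "e \<noteq> {}" using hE by blast
    thus "b e \<bullet> p = sig e p \<and> b e \<in> Bset e" using opt_iff[of e "b e" p] b(1) e by simp
  qed
  show "u \<bullet> p = (\<Sum>e\<in>E. w e * (sig e p)\<^sup>2)"
    unfolding b(2) inner_sum_left using bs by (intro sum.cong refl) (simp add: power2_eq_square)
  have "u \<bullet> q = (\<Sum>e\<in>E. w e * sig e p * (b e \<bullet> q))"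
    unfolding b(2) inner_sum_left using bs by (intro sum.cong refl) simp
  also have "\<dots> \<le> (\<Sum>e\<in>E. w e * sig e p * sig e q)"
  proof (rule sum_mono)
    fix e assume e: "e \<in> E"
    have h1: "0 \<le> w e * sig e p" using hw hE e sig_nonneg[of e p] by (simp add: less_imp_le)
    have h2: "b e \<bullet> q \<le> sig e q" using bs[OF e] Bset_le_sig by blast
    from mult_left_mono[OF h2 h1] show "w e * sig e p * (b e \<bullet> q) \<le> w e * sig e p * sig e q" .
  qed
  finally show "u \<bullet> q \<le> (\<Sum>e\<in>E. w e * sig e p * sig e q)" .
qed

lemma hLap_mono:
  fixes E :: "'v::finite set set"
  assumes hE: "\<forall>e\<in>E. e \<noteq> {}" and hw: "\<forall>e\<in>E. w e > 0"
    and u1: "u1 \<in> hLap E w p1" and u2: "u2 \<in> hLap E w p2"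
  shows "0 \<le> (u1 - u2) \<bullet> (p1 - p2)"
proof -
  have a: "u1 \<bullet> p1 = (\<Sum>e\<in>E. w e * (sig e p1)\<^sup>2)" "u1 \<bullet> p2 \<le> (\<Sum>e\<in>E. w e * sig e p1 * sig e p2)"
    using hLap_inner[OF hE hw u1] by auto
  have b: "u2 \<bullet> p2 = (\<Sum>e\<in>E. w e * (sig e p2)\<^sup>2)" "u2 \<bullet> p1 \<le> (\<Sum>e\<in>E. w e * sig e p2 * sig e p1)"
    using hLap_inner[OF hE hw u2] by auto
  have "0 \<le> (\<Sum>e\<in>E. w e * (sig e p1 - sig e p2)\<^sup>2)"
    using hw by (intro sum_nonneg mult_nonneg_nonneg) (auto simp: less_imp_le)
  also have "\<dots> = (\<Sum>e\<in>E. w e * (sig e p1)\<^sup>2) - 2 * (\<Sum>e\<in>E. w e * sig e p1 * sig e p2) + (\<Sum>e\<in>E. w e * (sig e p2)\<^sup>2)"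
    by (simp add: sum_subtractf sum.distrib sum_distrib_left power2_eq_square algebra_simps)
  also have "\<dots> \<le> (u1 - u2) \<bullet> (p1 - p2)"
  proof -
    have "(\<Sum>e\<in>E. w e * sig e p2 * sig e p1) = (\<Sum>e\<in>E. w e * sig e p1 * sig e p2)"
      by (simp add: mult.commute mult.left_commute)
    thus ?thesis using a b by (simp add: inner_diff_left inner_diff_right inner_commute)
  qed
  finally show ?thesis .
qed

lemma Dinv_diff: "Dinv E w (a - b) = Dinv E w a - Dinv E w b"
  unfolding Dinv_def by (simp add: vec_eq_iff diff_divide_distrib)

lemma resolvent_unique:
  fixes E :: "'v::finite set set"
  assumes hE: "\<forall>e\<in>E. e \<noteq> {}" and hw: "\<forall>e\<in>E. w e > 0" and hd: "\<forall>x. hdeg E w x > 0" and lam: "lam > 0"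
    and u1: "u1 \<in> hLap E w (Dinv E w g1)" and u2: "u2 \<in> hLap E w (Dinv E w g2)"
    and eq: "g1 + lam *\<^sub>R u1 = g2 + lam *\<^sub>R u2"
  shows "g1 = g2"
proof -
  have m: "0 \<le> (u2 - u1) \<bullet> (Dinv E w g2 - Dinv E w g1)" using hLap_mono[OF hE hw u2 u1] .
  have gd: "g1 - g2 = lam *\<^sub>R (u2 - u1)" using eq by (simp add: algebra_simps)
  have "(g1 - g2) \<bullet> Dinv E w (g1 - g2) = (g1 - g2) \<bullet> (Dinv E w g1 - Dinv E w g2)"
    by (simp only: Dinv_diff)
  also have "\<dots> = (lam *\<^sub>R (u2 - u1)) \<bullet> (Dinv E w g1 - Dinv E w g2)"
    by (simp only: gd)
  also have "\<dots> = lam * ((u2 - u1) \<bullet> (Dinv E w g1 - Dinv E w g2))"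
    by (rule inner_scaleR_left)
  also have "\<dots> = - (lam * ((u2 - u1) \<bullet> (Dinv E w g2 - Dinv E w g1)))"
    by (simp add: inner_diff_right algebra_simps)
  also have "\<dots> \<le> 0" using m lam by simp
  finally have le: "(\<Sum>z\<in>UNIV. (g1 - g2)$z * ((g1 - g2)$z / hdeg E w z)) \<le> 0"
    unfolding inner_vec_def Dinv_def by simp
  have nn: "\<forall>z\<in>UNIV. 0 \<le> (g1 - g2)$z * ((g1 - g2)$z / hdeg E w z)"
    using hd by (auto simp: less_imp_le)
  have "\<forall>z\<in>UNIV. (g1 - g2)$z * ((g1 - g2)$z / hdeg E w z) = 0"
    using sum_nonneg_eq_0_iff[of UNIV "\<lambda>z. (g1 - g2)$z * ((g1 - g2)$z / hdeg E w z)"] nn le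
      sum_nonneg[of UNIV "\<lambda>z. (g1 - g2)$z * ((g1 - g2)$z / hdeg E w z)"] by simp
  hence "\<forall>z. (g1 - g2)$z = 0" using hd by (simp add: less_imp_neq[symmetric])
  thus ?thesis by (simp add: vec_eq_iff)
qed




locale HG =
  fixes E :: "'v::finite set set" and w :: "'v set \<Rightarrow> real" and lam :: real
  assumes hE: "\<forall>e\<in>E. e \<noteq> {}" and hw: "\<forall>e\<in>E. w e > 0" and hd: "\<forall>x. hdeg E w x > 0" and lam: "lam > 0"
begin

lemma dnz: "hdeg E w z \<noteq> 0" using hd by (metis less_irrefl)

lemma res_char:
  assumes "u \<in> hLap E w (Dinv E w g)" "f = g + lam *\<^sub>R u"
  shows "resolvent E w lam f = g"
  unfolding resolvent_def
proof (rule the_equality)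
  show "f \<in> (\<lambda>u. g + lam *\<^sub>R u) ` nLap E w g" unfolding nLap_def using assms by blast
next
  fix g' assume "f \<in> (\<lambda>u. g' + lam *\<^sub>R u) ` nLap E w g'"
  then obtain u' where u': "u' \<in> hLap E w (Dinv E w g')" "f = g' + lam *\<^sub>R u'" unfolding nLap_def by blast
  show "g' = g" using resolvent_unique[OF hE hw hd lam u'(1) assms(1)] u'(2) assms(2) by simp
qed

lemma res_ex: "\<exists>u\<in>hLap E w (Dinv E w (resolvent E w lam f)). f = resolvent E w lam f + lam *\<^sub>R u"
proof -
  obtain g u where gu: "u \<in> hLap E w (Dinv E w g)" "f = g + lam *\<^sub>R u"
    using resolvent_exists[OF hE hw hd lam, of f] by blast
  have "resolvent E w lam f = g" by (rule res_char[OF gu])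
  thus ?thesis using gu by blast
qed

lemma hLap_neg:
  assumes "u \<in> hLap E w p" shows "- u \<in> hLap E w (- p)"
proof -
  obtain b where b: "\<forall>e\<in>E. b e \<in> Bset e \<and> (\<forall>c\<in>Bset e. c \<bullet> p \<le> b e \<bullet> p)"
    "u = (\<Sum>e\<in>E. (w e * (b e \<bullet> p)) *\<^sub>R b e)"
    using assms unfolding hLap_def by blast
  define b' where "b' e = - b e" for e
  have "\<forall>e\<in>E. b' e \<in> Bset e \<and> (\<forall>c\<in>Bset e. c \<bullet> (- p) \<le> b' e \<bullet> (- p))"
  proof
    fix e assume e: "e \<in> E"
    show "b' e \<in> Bset e \<and> (\<forall>c\<in>Bset e. c \<bullet> (- p) \<le> b' e \<bullet> (- p))"
    proof
      show "b' e \<in> Bset e" unfolding b'_def using b(1) e Bset_neg by blast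
      show "\<forall>c\<in>Bset e. c \<bullet> (- p) \<le> b' e \<bullet> (- p)"
      proof
        fix c assume "c \<in> Bset e"
        hence "- c \<in> Bset e" by (rule Bset_neg)
        hence "(- c) \<bullet> p \<le> b e \<bullet> p" using b(1) e by blast
        thus "c \<bullet> (- p) \<le> b' e \<bullet> (- p)" unfolding b'_def by simp
      qed
    qed
  qed
  moreover have "- u = (\<Sum>e\<in>E. (w e * (b' e \<bullet> (- p))) *\<^sub>R b' e)"
    unfolding b(2) b'_def by (simp add: sum_negf)
  ultimately show ?thesis unfolding hLap_def by blast
qed

lemma Dinv_neg: "Dinv E w (- g) = - Dinv E w g"
  unfolding Dinv_def by (simp add: vec_eq_iff)

lemma neg_help: "f = r + l *\<^sub>R u \<Longrightarrow> - f = - r + l *\<^sub>R (- u)" for f r u :: "real^'v"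
  by simp

lemma shift_help: "f = r + l *\<^sub>R u \<Longrightarrow> f + a = (r + a) + l *\<^sub>R u" for f r u a :: "real^'v"
  by simp

lemma res_neg: "resolvent E w lam (- f) = - resolvent E w lam f"
proof -
  obtain u where u: "u \<in> hLap E w (Dinv E w (resolvent E w lam f))" "f = resolvent E w lam f + lam *\<^sub>R u"
    using res_ex by blast
  have "- u \<in> hLap E w (Dinv E w (- resolvent E w lam f))" unfolding Dinv_neg by (rule hLap_neg[OF u(1)])
  moreover have "- f = - resolvent E w lam f + lam *\<^sub>R (- u)" using neg_help[OF u(2)] .
  ultimately show ?thesis by (rule res_char)
qed

definition one :: "real^'v" where "one = (\<chi> z. 1)"
definition dv :: "real^'v" where "dv = (\<chi> z. hdeg E w z)"

lemma hLap_shift: "hLap E w (p + c *\<^sub>R one) = hLap E w p"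
proof -
  have i: "\<And>e b. b \<in> Bset e \<Longrightarrow> b \<bullet> (p + c *\<^sub>R one) = b \<bullet> p"
    unfolding one_def by (simp add: inner_add_right Bset_ones)
  have c: "\<And>b. (\<forall>e\<in>E. b e \<in> Bset e \<and> (\<forall>c'\<in>Bset e. c' \<bullet> (p + c *\<^sub>R one) \<le> b e \<bullet> (p + c *\<^sub>R one)))
     \<longleftrightarrow> (\<forall>e\<in>E. b e \<in> Bset e \<and> (\<forall>c'\<in>Bset e. c' \<bullet> p \<le> b e \<bullet> p))"
    using i by (metis (no_types, lifting))
  have s: "\<And>b. (\<forall>e\<in>E. b e \<in> Bset e) \<Longrightarrow> (\<Sum>e\<in>E. (w e * (b e \<bullet> (p + c *\<^sub>R one))) *\<^sub>R b e) = (\<Sum>e\<in>E. (w e * (b e \<bullet> p)) *\<^sub>R b e)"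
    by (intro sum.cong refl) (auto simp: i)
  show ?thesis unfolding hLap_def
  proof (intro equalityI subsetI)
    fix x assume "x \<in> {\<Sum>e\<in>E. (w e * (b e \<bullet> (p + c *\<^sub>R one))) *\<^sub>R b e |b. \<forall>e\<in>E. b e \<in> Bset e \<and> (\<forall>c'\<in>Bset e. c' \<bullet> (p + c *\<^sub>R one) \<le> b e \<bullet> (p + c *\<^sub>R one))}"
    then obtain b where b: "\<forall>e\<in>E. b e \<in> Bset e \<and> (\<forall>c'\<in>Bset e. c' \<bullet> (p + c *\<^sub>R one) \<le> b e \<bullet> (p + c *\<^sub>R one))"
       "x = (\<Sum>e\<in>E. (w e * (b e \<bullet> (p + c *\<^sub>R one))) *\<^sub>R b e)" by blast
    have b1: "\<forall>e\<in>E. b e \<in> Bset e \<and> (\<forall>c'\<in>Bset e. c' \<bullet> p \<le> b e \<bullet> p)" using c[of b] b(1) by simp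
    have "x = (\<Sum>e\<in>E. (w e * (b e \<bullet> p)) *\<^sub>R b e)" using s[of b] b1 b(2) by simp
    with b1 show "x \<in> {\<Sum>e\<in>E. (w e * (b e \<bullet> p)) *\<^sub>R b e |b. \<forall>e\<in>E. b e \<in> Bset e \<and> (\<forall>c\<in>Bset e. c \<bullet> p \<le> b e \<bullet> p)}" by blast
  next
    fix x assume "x \<in> {\<Sum>e\<in>E. (w e * (b e \<bullet> p)) *\<^sub>R b e |b. \<forall>e\<in>E. b e \<in> Bset e \<and> (\<forall>c\<in>Bset e. c \<bullet> p \<le> b e \<bullet> p)}"
    then obtain b where b: "\<forall>e\<in>E. b e \<in> Bset e \<and> (\<forall>c'\<in>Bset e. c' \<bullet> p \<le> b e \<bullet> p)"
       "x = (\<Sum>e\<in>E. (w e * (b e \<bullet> p)) *\<^sub>R b e)" by blast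
    have b1: "\<forall>e\<in>E. b e \<in> Bset e \<and> (\<forall>c'\<in>Bset e. c' \<bullet> (p + c *\<^sub>R one) \<le> b e \<bullet> (p + c *\<^sub>R one))" using c[of b] b(1) by simp
    have "x = (\<Sum>e\<in>E. (w e * (b e \<bullet> (p + c *\<^sub>R one))) *\<^sub>R b e)" using s[of b] b(1) b(2) by simp
    with b1 show "x \<in> {\<Sum>e\<in>E. (w e * (b e \<bullet> (p + c *\<^sub>R one))) *\<^sub>R b e |b. \<forall>e\<in>E. b e \<in> Bset e \<and> (\<forall>c'\<in>Bset e. c' \<bullet> (p + c *\<^sub>R one) \<le> b e \<bullet> (p + c *\<^sub>R one))}" by blast
  qed
qed

lemma Dinv_shift: "Dinv E w (g + c *\<^sub>R dv) = Dinv E w g + c *\<^sub>R one"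
  unfolding Dinv_def dv_def one_def using dnz by (simp add: vec_eq_iff add_divide_distrib)

lemma res_shift: "resolvent E w lam (f + c *\<^sub>R dv) = resolvent E w lam f + c *\<^sub>R dv"
proof -
  obtain u where u: "u \<in> hLap E w (Dinv E w (resolvent E w lam f))" "f = resolvent E w lam f + lam *\<^sub>R u"
    using res_ex by blast
  have "u \<in> hLap E w (Dinv E w (resolvent E w lam f + c *\<^sub>R dv))" unfolding Dinv_shift hLap_shift by (rule u(1))
  moreover have "f + c *\<^sub>R dv = (resolvent E w lam f + c *\<^sub>R dv) + lam *\<^sub>R u" using shift_help[OF u(2)] .
  ultimately show ?thesis by (rule res_char)
qed

lemma wip_delta: "wip E w g (delta x - delta y) = g$x / hdeg E w x - g$y / hdeg E w y"
proof -
  have "wip E w g (delta x - delta y) = (\<Sum>z\<in>UNIV. (if z = x then g$z / hdeg E w z else 0) - (if z = y then g$z / hdeg E w z else 0))"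
    unfolding wip_def by (intro sum.cong refl) (simp add: delta_nth diff_divide_distrib)
  also have "\<dots> = g$x / hdeg E w x - g$y / hdeg E w y"
    by (simp add: sum_subtractf)
  finally show ?thesis .
qed

end




lemma hdist_refl: "hdist E a a = 0"
  unfolding hdist_def by (rule Least_eq_0) simp

lemma hdist_ge1:
  assumes "hconnected E" "a \<noteq> b" shows "1 \<le> hdist E a b"
proof -
  have "(a, b) \<in> {(a, b). hadj E a b}\<^sup>*" using assms(1) unfolding hconnected_def by blast
  then obtain n where "(a, b) \<in> {(a, b). hadj E a b} ^^ n" using rtrancl_power by blast
  hence "(a, b) \<in> {(a, b). hadj E a b} ^^ (hdist E a b)" unfolding hdist_def by (rule LeastI)
  moreover have "hdist E a b \<noteq> 0"
  proof
    assume "hdist E a b = 0"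
    with calculation have "(a, b) \<in> {(a, b). hadj E a b} ^^ 0" by simp
    thus False using assms(2) by simp
  qed
  ultimately show ?thesis by simp
qed

lemma zero_Lip: "0 \<in> wLip1 E w" unfolding wLip1_def by simp

lemma neg_Lip:
  assumes "f \<in> wLip1 E w" shows "- f \<in> wLip1 E w"
proof -
  have h: "\<forall>x y. \<bar>f $ x / hdeg E w x - f $ y / hdeg E w y\<bar> \<le> real (hdist E x y)"
    using assms unfolding wLip1_def by simp
  have "\<forall>x y. \<bar>(- f) $ x / hdeg E w x - (- f) $ y / hdeg E w y\<bar> \<le> real (hdist E x y)"
  proof (intro allI)
    fix x y
    have "\<bar>(- f) $ x / hdeg E w x - (- f) $ y / hdeg E w y\<bar> = \<bar>f $ x / hdeg E w x - f $ y / hdeg E w y\<bar>"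
      by (simp add: abs_minus_commute)
    thus "\<bar>(- f) $ x / hdeg E w x - (- f) $ y / hdeg E w y\<bar> \<le> real (hdist E x y)" using h by simp
  qed
  thus ?thesis unfolding wLip1_def by simp
qed

lemma pt_bound:
  fixes g :: "real^'v::finite" and d :: "'v \<Rightarrow> real"
  assumes dp: "\<forall>z. d z > 0" and s: "(\<Sum>z\<in>UNIV. (g$z)\<^sup>2 / d z) \<le> K"
  shows "\<bar>g$a / d a\<bar> \<le> 1 + K / d a"
proof -
  have "(g$a)\<^sup>2 / d a \<le> (\<Sum>z\<in>UNIV. (g$z)\<^sup>2 / d z)"
    using dp by (intro member_le_sum divide_nonneg_nonneg) (auto simp: less_imp_le)
  hence "(g$a)\<^sup>2 / d a \<le> K" using s by linarith
  hence "(g$a)\<^sup>2 / d a / d a \<le> K / d a" using dp by (intro divide_right_mono) (auto simp: less_imp_le)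
  moreover have "(g$a / d a)\<^sup>2 = (g$a)\<^sup>2 / d a / d a" by (simp add: power2_eq_square)
  ultimately have "(g$a / d a)\<^sup>2 \<le> K / d a" by simp
  thus ?thesis using abs_le_sq[of "g$a / d a"] by linarith
qed

context HG
begin

lemma hLap_scale:
  assumes "0 < c" "u \<in> hLap E w p" shows "c *\<^sub>R u \<in> hLap E w (c *\<^sub>R p)"
proof -
  obtain b where b: "\<forall>e\<in>E. b e \<in> Bset e \<and> (\<forall>c\<in>Bset e. c \<bullet> p \<le> b e \<bullet> p)"
    "u = (\<Sum>e\<in>E. (w e * (b e \<bullet> p)) *\<^sub>R b e)"
    using assms(2) unfolding hLap_def by blast
  have "\<forall>e\<in>E. b e \<in> Bset e \<and> (\<forall>c'\<in>Bset e. c' \<bullet> (c *\<^sub>R p) \<le> b e \<bullet> (c *\<^sub>R p))"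
    using b(1) assms(1) by (simp add: mult_left_mono)
  moreover have "c *\<^sub>R u = (\<Sum>e\<in>E. (w e * (b e \<bullet> (c *\<^sub>R p))) *\<^sub>R b e)"
    unfolding b(2) scaleR_sum_right by (intro sum.cong refl) (simp add: algebra_simps)
  ultimately show ?thesis unfolding hLap_def by blast
qed

lemma KD_bound: "\<exists>C. \<forall>f\<in>wLip1 E w. wip E w (resolvent E w lam f) (delta x - delta y) \<le> C"
proof -
  let ?d = "hdeg E w"
  define M where "M = Max (range (\<lambda>(a, b). hdist E a b))"
  have hM: "\<And>a b. hdist E a b \<le> M"
  proof -
    fix a b
    have "(\<lambda>(a, b). hdist E a b) (a, b) \<le> M" unfolding M_def by (rule Max_ge) auto
    thus "hdist E a b \<le> M" by simp
  qed
  define K where "K = (\<Sum>z\<in>UNIV. ?d z * (real M)\<^sup>2)"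
  have "\<forall>f\<in>wLip1 E w. wip E w (resolvent E w lam f) (delta x - delta y) \<le> 2 + K / ?d x + K / ?d y"
  proof
    fix f assume fL: "f \<in> wLip1 E w"
    define c where "c = f$x / ?d x"
    define f' where "f' = f + (- c) *\<^sub>R dv"
    define g where "g = resolvent E w lam f'"
    have ff: "f = f' + c *\<^sub>R dv" unfolding f'_def by simp
    have Jf: "resolvent E w lam f = g + c *\<^sub>R dv" unfolding ff g_def by (rule res_shift)
    have val: "wip E w (resolvent E w lam f) (delta x - delta y) = g$x / ?d x - g$y / ?d y"
      unfolding Jf wip_delta using dnz by (simp add: dv_def add_divide_distrib)
    obtain u where u: "u \<in> hLap E w (Dinv E w g)" "f' = g + lam *\<^sub>R u"
      using res_ex[of f'] unfolding g_def by blast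
    have un: "0 \<le> u \<bullet> Dinv E w g"
      unfolding hLap_inner(1)[OF hE hw u(1)] using hw by (intro sum_nonneg mult_nonneg_nonneg) (auto simp: less_imp_le)
    have eq1: "(\<Sum>z\<in>UNIV. f'$z * g$z / ?d z) = (\<Sum>z\<in>UNIV. (g$z)\<^sup>2 / ?d z) + lam * (u \<bullet> Dinv E w g)"
    proof -
      have "(\<Sum>z\<in>UNIV. f'$z * g$z / ?d z) = (\<Sum>z\<in>UNIV. (g$z)\<^sup>2 / ?d z + lam * (u$z * (g$z / ?d z)))"
        using u(2) by (intro sum.cong refl) (simp add: power2_eq_square algebra_simps add_divide_distrib)
      thus ?thesis by (simp add: sum.distrib sum_distrib_left inner_vec_def Dinv_def)
    qed
    have le2: "(\<Sum>z\<in>UNIV. f'$z * g$z / ?d z) \<le> (\<Sum>z\<in>UNIV. ((f'$z)\<^sup>2 + (g$z)\<^sup>2) / (2 * ?d z))"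
    proof (rule sum_mono)
      fix z
      have "2 * (f'$z * g$z) \<le> (f'$z)\<^sup>2 + (g$z)\<^sup>2" using sum_squares_bound[of "f'$z" "g$z"] by simp
      hence "2 * (f'$z * g$z) / (2 * ?d z) \<le> ((f'$z)\<^sup>2 + (g$z)\<^sup>2) / (2 * ?d z)"
        using hd by (intro divide_right_mono) (auto simp: less_imp_le)
      thus "f'$z * g$z / ?d z \<le> ((f'$z)\<^sup>2 + (g$z)\<^sup>2) / (2 * ?d z)" by simp
    qed
    have split: "(\<Sum>z\<in>UNIV. ((f'$z)\<^sup>2 + (g$z)\<^sup>2) / (2 * ?d z)) = (\<Sum>z\<in>UNIV. (f'$z)\<^sup>2 / ?d z) / 2 + (\<Sum>z\<in>UNIV. (g$z)\<^sup>2 / ?d z) / 2"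
      by (simp add: sum.distrib sum_divide_distrib add_divide_distrib mult.commute)
    have gle: "(\<Sum>z\<in>UNIV. (g$z)\<^sup>2 / ?d z) \<le> (\<Sum>z\<in>UNIV. (f'$z)\<^sup>2 / ?d z)"
    proof -
      have "0 \<le> lam * (u \<bullet> Dinv E w g)" using un lam by simp
      thus ?thesis using eq1 le2 split by linarith
    qed
    have fle: "(\<Sum>z\<in>UNIV. (f'$z)\<^sup>2 / ?d z) \<le> K"
      unfolding K_def
    proof (rule sum_mono)
      fix z
      have dz: "?d z > 0" using hd by blast
      have "f'$z / ?d z = f$z / ?d z - f$x / ?d x"
        unfolding f'_def c_def dv_def using dz by (simp add: diff_divide_distrib)
      hence "\<bar>f'$z / ?d z\<bar> \<le> real (hdist E z x)" using fL unfolding wLip1_def by simp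
      also have "\<dots> \<le> real M" using hM by simp
      finally have a: "\<bar>f'$z / ?d z\<bar> \<le> real M" .
      have "\<bar>f'$z / ?d z\<bar>\<^sup>2 \<le> (real M)\<^sup>2" by (rule power_mono[OF a abs_ge_zero])
      hence "(f'$z / ?d z)\<^sup>2 \<le> (real M)\<^sup>2" by (simp only: power2_abs)
      hence "?d z * (f'$z / ?d z)\<^sup>2 \<le> ?d z * (real M)\<^sup>2" using dz by (intro mult_left_mono) auto
      moreover have "?d z * (f'$z / ?d z)\<^sup>2 = (f'$z)\<^sup>2 / ?d z" using dz by (simp add: power2_eq_square)
      ultimately show "(f'$z)\<^sup>2 / ?d z \<le> ?d z * (real M)\<^sup>2" by simp
    qed
    have gK: "(\<Sum>z\<in>UNIV. (g$z)\<^sup>2 / ?d z) \<le> K" using gle fle by linarith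
    have bx: "\<bar>g$x / ?d x\<bar> \<le> 1 + K / ?d x" by (rule pt_bound[OF hd gK])
    have by': "\<bar>g$y / ?d y\<bar> \<le> 1 + K / ?d y" by (rule pt_bound[OF hd gK])
    show "wip E w (resolvent E w lam f) (delta x - delta y) \<le> 2 + K / ?d x + K / ?d y"
      unfolding val using bx by' by linarith
  qed
  thus ?thesis by blast
qed

lemma KD_pos:
  assumes conn: "hconnected E" and xy: "x \<noteq> y"
  shows "\<exists>f\<in>wLip1 E w. 0 < wip E w (resolvent E w lam f) (delta x - delta y)"
proof -
  let ?d = "hdeg E w"
  define psi :: "real^'v" where "psi = delta x"
  obtain u0 where u0: "u0 \<in> hLap E w psi" using Q_dir[OF hE hw, of psi 0] by blast
  define k where "k z = psi$z + lam * u0$z / ?d z" for z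
  define C where "C = (\<Sum>z\<in>UNIV. \<bar>k z\<bar>)"
  have C0: "0 \<le> C" unfolding C_def by (simp add: sum_nonneg)
  define eps where "eps = 1 / (2 * C + 1)"
  have eps0: "0 < eps" unfolding eps_def using C0 by simp
  define g where "g = (\<chi> z. eps * ?d z * psi$z)"
  have Dg: "Dinv E w g = eps *\<^sub>R psi" unfolding Dinv_def g_def using dnz by (simp add: vec_eq_iff)
  define f where "f = g + lam *\<^sub>R (eps *\<^sub>R u0)"
  have Jf: "resolvent E w lam f = g"
  proof (rule res_char)
    show "eps *\<^sub>R u0 \<in> hLap E w (Dinv E w g)" unfolding Dg by (rule hLap_scale[OF eps0 u0])
  qed (simp add: f_def)
  have fk: "\<And>z. f$z / ?d z = eps * k z"
    unfolding f_def g_def k_def using dnz by (simp add: field_simps)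
  have fL: "f \<in> wLip1 E w" unfolding wLip1_def
  proof (intro CollectI allI)
    fix a b
    show "\<bar>f$a / ?d a - f$b / ?d b\<bar> \<le> real (hdist E a b)"
    proof (cases "a = b")
      case True thus ?thesis by simp
    next
      case False
      have h1: "1 \<le> real (hdist E a b)" using hdist_ge1[OF conn False] by simp
      have ka: "\<bar>k a\<bar> \<le> C" unfolding C_def by (rule member_le_sum) auto
      have kb: "\<bar>k b\<bar> \<le> C" unfolding C_def by (rule member_le_sum) auto
      have "\<bar>f$a / ?d a - f$b / ?d b\<bar> = eps * \<bar>k a - k b\<bar>" unfolding fk using eps0
        by (simp add: abs_mult right_diff_distrib[symmetric])
      also have "\<dots> \<le> eps * (2 * C)" using ka kb eps0 by (intro mult_left_mono) auto
      also have "\<dots> \<le> 1" unfolding eps_def using C0 by (simp add: field_simps)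
      finally show ?thesis using h1 by linarith
    qed
  qed
  have "wip E w (resolvent E w lam f) (delta x - delta y) = eps"
    unfolding Jf wip_delta g_def psi_def using dnz xy by (simp add: delta_nth)
  thus ?thesis using fL eps0 by auto
qed

end




theorem mainTheorem6:
  fixes E :: "'v::finite set set" and w :: "'v set \<Rightarrow> real" and lam :: real
  assumes "hyper_graph E w"
    and "hconnected E"
    and "\<forall>x. hdeg E w x > 0"
    and "lam > 0"
  shows "\<forall>x y z.
          (KD E w lam x y = 0 \<longleftrightarrow> x = y) \<and>
          KD E w lam x y = KD E w lam y x \<and>
          KD E w lam x z \<le> KD E w lam x y + KD E w lam y z"
proof -
  have hE: "\<forall>e\<in>E. e \<noteq> {}" and hw: "\<forall>e\<in>E. w e > 0" using assms(1) unfolding hyper_graph_def by auto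
  interpret HG E w lam using hE hw assms(3,4) by unfold_locales
  define W where "W f a b = wip E w (resolvent E w lam f) (delta a - delta b)" for f a b
  define L where "L = wLip1 E w"
  have KDW: "\<And>a b. KD E w lam a b = (SUP f\<in>L. W f a b)" unfolding KD_def W_def L_def by simp
  have bdd: "\<And>a b. bdd_above ((\<lambda>f. W f a b) ` L)"
  proof -
    fix a b
    obtain C where C: "\<forall>f\<in>wLip1 E w. wip E w (resolvent E w lam f) (delta a - delta b) \<le> C"
      using KD_bound[of a b] by blast
    show "bdd_above ((\<lambda>f. W f a b) ` L)" unfolding W_def L_def by (rule bdd_aboveI2) (use C in blast)
  qed
  have ne: "L \<noteq> {}" unfolding L_def using zero_Lip by blast
  have add: "\<And>f a b c. W f a c = W f a b + W f b c" unfolding W_def wip_delta by simp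
  have anti: "\<And>f a b. W f b a = W (- f) a b" unfolding W_def wip_delta res_neg by simp
  have negL: "\<And>f. f \<in> L \<Longrightarrow> - f \<in> L" unfolding L_def by (rule neg_Lip)
  have upper: "\<And>f a b. f \<in> L \<Longrightarrow> W f a b \<le> KD E w lam a b"
    unfolding KDW by (rule cSUP_upper[OF _ bdd])
  show ?thesis
  proof (intro allI conjI)
    fix x y z
    show "KD E w lam x y = 0 \<longleftrightarrow> x = y"
    proof
      assume h: "KD E w lam x y = 0"
      show "x = y"
      proof (rule ccontr)
        assume "x \<noteq> y"
        then obtain f where f: "f \<in> L" "0 < W f x y" using KD_pos[OF assms(2)] unfolding W_def L_def by blast
        have "W f x y \<le> KD E w lam x y" by (rule upper[OF f(1)])
        thus False using h f(2) by linarith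
      qed
    next
      assume "x = y"
      hence "\<And>f. W f x y = 0" unfolding W_def wip_delta by simp
      hence "KD E w lam x y = (SUP f\<in>L. (0::real))" unfolding KDW by simp
      thus "KD E w lam x y = 0" using ne by simp
    qed
    have "(\<lambda>f. W f x y) ` L = (\<lambda>f. W f y x) ` L"
    proof (intro equalityI subsetI)
      fix t assume "t \<in> (\<lambda>f. W f x y) ` L"
      then obtain f where f: "f \<in> L" "t = W f x y" by blast
      have "W (- f) y x = W f x y" using anti[of "- f" y x] by (simp only: minus_minus)
      hence "t = W (- f) y x" using f(2) by simp
      thus "t \<in> (\<lambda>f. W f y x) ` L" using negL[OF f(1)] by blast
    next
      fix t assume "t \<in> (\<lambda>f. W f y x) ` L"
      then obtain f where f: "f \<in> L" "t = W f y x" by blast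
      have "t = W (- f) x y" using f(2) anti[of f y x] by simp
      thus "t \<in> (\<lambda>f. W f x y) ` L" using negL[OF f(1)] by blast
    qed
    thus "KD E w lam x y = KD E w lam y x" unfolding KDW by simp
    show "KD E w lam x z \<le> KD E w lam x y + KD E w lam y z"
      unfolding KDW[of x z]
    proof (rule cSUP_least[OF ne])
      fix f assume f: "f \<in> L"
      have "W f x z = W f x y + W f y z" by (rule add)
      also have "\<dots> \<le> KD E w lam x y + KD E w lam y z" using upper[OF f, of x y] upper[OF f, of y z] by linarith
      finally show "W f x z \<le> KD E w lam x y + KD E w lam y z" .
    qed
  qed
qed


end
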